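(* Let $a\ge b\ge1$ be integers with either $b\ge2$, or $b=1$ and $a\ge5$, and $A=\begin{pmatrix}2&-a\\-b&2\end{pmatrix}$. For $j\in\mathbb Z_+$ set $\eta_j=-\langle\beta_1^j,(\beta_2^0)^\vee\rangle$ and $\gamma_j=-\langle\beta_2^{2j},(\beta_1^0)^\vee\rangle$. Then both sequences $\xi_j:=\eta_{2j}$ and $\zeta_j:=\eta_{2j+1}$ satisfy the recurrence $x_j=(ab-2)x_{j-1}-x_{j-2}$ ($j\ge2$) with initial conditions $\xi_0=a$, $\xi_1=a(ab-3)$ and $\zeta_0=ab-2$, $\zeta_1=\zeta_0^2-2$. Moreover $a\gamma_j=b\xi_j$ for all $j$; $(\eta_j)$ is constant if $a=b=2$; if $b=1$ and $a\ge5$ then $\eta_1<\eta_0<\eta_3<\eta_2<\eta_5<\cdots$; and in the remaining cases ($b\ge2$, $(a,b)\ne(2,2)$) $\eta_0<\eta_1<\eta_2<\cdots$.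
   Context: Let $\mathfrak g(A)$ have simple roots $\alpha_1,\alpha_2$, invariant form $(\alpha_1,\alpha_1)=2$, $(\alpha_2,\alpha_2)=2a/b$, $(\alpha_1,\alpha_2)=-a$, and for a real root $\beta$ let $\langle\lambda,\beta^\vee\rangle=2(\lambda,\beta)/(\beta,\beta)$. $\mathbb Z_+=\{0,1,2,\dots\}$. Define $c_0=d_0=0$, $c_1=d_1=1$, $c_{k+2}+c_k=a d_{k+1}$, $d_{k+2}+d_k=b c_{k+1}$, and $\beta_1^j=c_j\alpha_1+d_{j+1}\alpha_2$, $\beta_2^j=c_{j+1}\alpha_1+d_j\alpha_2$; in particular $\beta_2^0=\alpha_1$, $\beta_1^0=\alpha_2$. *)

theory Defs
  imports Main "HOL.Real"
begin

text \<open>Elements of the root lattice are represented by their coordinates (x1, x2)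
  w.r.t. the simple roots, i.e. x1 alpha1 + x2 alpha2.\<close>

definition invform :: "int \<Rightarrow> int \<Rightarrow> real \<times> real \<Rightarrow> real \<times> real \<Rightarrow> real" where
  "invform a b x y =
     2 * fst x * fst y
     + (- real_of_int a) * (fst x * snd y + snd x * fst y)
     + (2 * real_of_int a / real_of_int b) * snd x * snd y"

definition coroot_pair :: "int \<Rightarrow> int \<Rightarrow> real \<times> real \<Rightarrow> real \<times> real \<Rightarrow> real" where
  "coroot_pair a b lam beta = 2 * invform a b lam beta / invform a b beta beta"

fun cd :: "int \<Rightarrow> int \<Rightarrow> nat \<Rightarrow> int \<times> int" where
  "cd a b 0 = (0, 0)"
| "cd a b (Suc 0) = (1, 1)"
| "cd a b (Suc (Suc k)) =
     (a * snd (cd a b (Suc k)) - fst (cd a b k), b * fst (cd a b (Suc k)) - snd (cd a b k))"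

definition cseq :: "int \<Rightarrow> int \<Rightarrow> nat \<Rightarrow> int" where "cseq a b k = fst (cd a b k)"
definition dseq :: "int \<Rightarrow> int \<Rightarrow> nat \<Rightarrow> int" where "dseq a b k = snd (cd a b k)"

definition beta1 :: "int \<Rightarrow> int \<Rightarrow> nat \<Rightarrow> real \<times> real" where
  "beta1 a b j = (real_of_int (cseq a b j), real_of_int (dseq a b (Suc j)))"
definition beta2 :: "int \<Rightarrow> int \<Rightarrow> nat \<Rightarrow> real \<times> real" where
  "beta2 a b j = (real_of_int (cseq a b (Suc j)), real_of_int (dseq a b j))"

definition eta :: "int \<Rightarrow> int \<Rightarrow> nat \<Rightarrow> real" where
  "eta a b j = - coroot_pair a b (beta1 a b j) (beta2 a b 0)"
definition gamma :: "int \<Rightarrow> int \<Rightarrow> nat \<Rightarrow> real" where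
  "gamma a b j = - coroot_pair a b (beta2 a b (2 * j)) (beta1 a b 0)"

end

theory Submission
  imports Defs
begin

lemma cS: "cseq a b (Suc (Suc k)) = a * dseq a b (Suc k) - cseq a b k"
  by (simp add: cseq_def dseq_def)
lemma dS: "dseq a b (Suc (Suc k)) = b * cseq a b (Suc k) - dseq a b k"
  by (simp add: cseq_def dseq_def)
lemma c01: "cseq a b 0 = 0" "cseq a b 1 = 1" "dseq a b 0 = 0" "dseq a b 1 = 1"
  "cseq a b (Suc 0) = 1" "dseq a b (Suc 0) = 1"
  by (simp_all add: cseq_def dseq_def)

lemma c4: "cseq a b (k+4) = (a*b-2) * cseq a b (k+2) - cseq a b k"
proof -
  have 1: "cseq a b (k+4) = a * dseq a b (k+3) - cseq a b (k+2)"
    using cS[of a b "k+2"] by (simp add: numeral_eq_Suc)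
  have 2: "dseq a b (k+3) = b * cseq a b (k+2) - dseq a b (k+1)"
    using dS[of a b "k+1"] by (simp add: numeral_eq_Suc)
  have 3: "cseq a b (k+2) = a * dseq a b (k+1) - cseq a b k"
    using cS[of a b "k"] by (simp add: numeral_eq_Suc)
  show ?thesis unfolding 1 2 using 3 by (simp add: algebra_simps)
qed

lemma d4: "dseq a b (k+4) = (a*b-2) * dseq a b (k+2) - dseq a b k"
proof -
  have 1: "dseq a b (k+4) = b * cseq a b (k+3) - dseq a b (k+2)"
    using dS[of a b "k+2"] by (simp add: numeral_eq_Suc)
  have 2: "cseq a b (k+3) = a * dseq a b (k+2) - cseq a b (k+1)"
    using cS[of a b "k+1"] by (simp add: numeral_eq_Suc)
  have 3: "dseq a b (k+2) = b * cseq a b (k+1) - dseq a b k"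
    using dS[of a b "k"] by (simp add: numeral_eq_Suc)
  show ?thesis unfolding 1 2 using 3 by (simp add: algebra_simps)
qed

definition e :: "int \<Rightarrow> int \<Rightarrow> nat \<Rightarrow> int" where
  "e a b k = a * dseq a b (Suc k) - 2 * cseq a b k"

lemma e4: "e a b (k+4) = (a*b-2) * e a b (k+2) - e a b k"
proof -
  have q1: "e a b (k+4) = a * dseq a b ((k+1)+4) - 2 * cseq a b (k+4)" by (simp add: e_def)
  have q2: "e a b (k+2) = a * dseq a b ((k+1)+2) - 2 * cseq a b (k+2)" by (simp add: e_def)
  have q3: "e a b k = a * dseq a b (k+1) - 2 * cseq a b k" by (simp add: e_def)
  show ?thesis unfolding q1 q2 q3 c4[of a b k] d4[of a b "k+1"] by (simp add: algebra_simps)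
qed

lemma eta_e: assumes "b \<ge> 1" shows "eta a b k = real_of_int (e a b k)"
  by (simp add: eta_def coroot_pair_def invform_def beta1_def beta2_def e_def c01 field_simps)

lemma gamma_e: assumes "b \<ge> 1" "a \<ge> 1"
  shows "gamma a b j = real_of_int (b * cseq a b (2*j+1) - 2 * dseq a b (2*j))"
  using assms
  by (simp add: gamma_def coroot_pair_def invform_def beta1_def beta2_def c01 field_simps)

definition P :: "int \<Rightarrow> int \<Rightarrow> nat \<Rightarrow> bool" where
  "P a b k = (cseq a b (2*k+1) = dseq a b (2*k+1) \<and> b * cseq a b (2*k) = a * dseq a b (2*k))"

lemma aux: "(b::int)*(x*c2-c0) = x*(b*c2) - b*c0" by (simp add: algebra_simps)

lemma parity0: "P a b k \<and> P a b (Suc k)"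
proof (induction k)
  case 0
  then show ?case by (simp add: P_def numeral_eq_Suc cS dS c01)
next
  case (Suc k)
  have i1: "2 * Suc (Suc k) + 1 = (2*k+1) + 4" "2 * Suc k + 1 = (2*k+1)+2"
     "2 * Suc (Suc k) = (2*k) + 4" "2 * Suc k = (2*k)+2" by simp_all
  have "P a b (Suc (Suc k))"
  proof -
    have i2: "2*k+4+1 = (2*k+1)+4" "2*k+2+1 = (2*k+1)+2" by simp_all
    have h: "cseq a b (2 * k + 1) = dseq a b (2 * k + 1)" "b * cseq a b (2 * k) = a * dseq a b (2 * k)"
      "cseq a b ((2 * k + 1)+2) = dseq a b ((2 * k + 1)+2)" "b * cseq a b (2 * k + 2) = a * dseq a b (2 * k + 2)"
      using Suc unfolding P_def i1 i2 by auto
    have "b * ((a * b - 2) * cseq a b (2 * k + 2) - cseq a b (2 * k)) =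
     a * ((a * b - 2) * dseq a b (2 * k + 2) - dseq a b (2 * k))"
      using aux[of b "a*b-2" "cseq a b (2 * k + 2)" "cseq a b (2 * k)"] aux[of a "a*b-2" "dseq a b (2 * k + 2)" "dseq a b (2 * k)"] h(2) h(4) by metis
    moreover have "(a * b - 2) * cseq a b ((2 * k + 1)+2) - cseq a b (2 * k + 1) = (a * b - 2) * dseq a b ((2 * k + 1)+2) - dseq a b (2 * k + 1)"
      using h(1) h(3) by simp
    ultimately show ?thesis unfolding P_def i1 i2 c4 d4 by simp
  qed
  then show ?case using Suc by simp
qed

lemma parity: "cseq a b (2*k+1) = dseq a b (2*k+1)" "b * cseq a b (2*k) = a * dseq a b (2*k)"
  using parity0[of a b k] unfolding P_def by auto

lemma grow:
  fixes f :: "nat \<Rightarrow> int"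
  assumes r: "r \<ge> 2" and rec: "\<And>k. f (k+2) = r * f (k+1) - f k"
    and p: "0 < f 0" "f 0 \<le> f 1"
  shows "0 < f k \<and> f k \<le> f (Suc k)"
proof (induction k)
  case 0 then show ?case using p by simp
next
  case (Suc k)
  have "2 * f (Suc k) \<le> r * f (Suc k)" using Suc r by (intro mult_right_mono) auto
  moreover have "f (Suc (Suc k)) = r * f (Suc k) - f k" using rec[of k] by simp
  ultimately show ?case using Suc by linarith
qed

lemma L1: fixes a t :: int assumes "3\<le>a" "2*a\<le>t"
  shows "0 < t-2-a \<and> t-2-a \<le> ((t-2)^2-2) - a*(t-3)"
proof -
  have "2*a*(t-4) \<le> t*(t-4)" using assms by (intro mult_right_mono) auto
  moreover have "0 \<le> (t-2)*(t-4)" using assms by simp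
  ultimately show ?thesis using assms by (simp add: power2_eq_square algebra_simps)
qed
lemma L2: fixes a t :: int assumes "3\<le>a" "6\<le>t"
  shows "0 < a*(t-3)-(t-2) \<and> a*(t-3)-(t-2) \<le> ((t-2)*(a*(t-3)) - a) - ((t-2)^2-2)"
proof -
  have h1: "3*(t-3) \<le> a*(t-3)" using assms by (intro mult_right_mono) auto
  have h2: "3*((t-2)*(t-4)) \<le> a*((t-2)*(t-4))" using assms by (intro mult_right_mono) auto
  have h3: "0 \<le> (t-2)*(2*t-10)" using assms by simp
  show ?thesis using assms h1 h2 h3 by (simp add: power2_eq_square algebra_simps)
qed
lemma L3: fixes a :: int assumes "5\<le>a"
  shows "0 < a-(a-2) \<and> a-(a-2) \<le> a*(a-3) - ((a-2)^2-2)"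
  using assms by (simp add: power2_eq_square algebra_simps)
lemma L4: fixes a :: int assumes "5\<le>a"
  shows "0 < ((a-2)^2-2) - a \<and> ((a-2)^2-2) - a \<le> ((a-2)*((a-2)^2-2) - (a-2)) - a*(a-3)"
proof -
  have h1: "5*a \<le> a*a" using assms by (intro mult_right_mono) auto
  have "(a-2)*(a-2)-3 = a*a - 4*a + 1" by (simp add: algebra_simps)
  then have h1': "0 \<le> (a-2)*(a-2)-3" using h1 assms by linarith
  have h2: "0 \<le> (a-4)*((a-2)*(a-2)-3)" using assms h1' by (intro mult_nonneg_nonneg) auto
  have e: "((a-2)^2-2) - a = a*a - 5*a + 2" by (simp add: power2_eq_square algebra_simps)
  have "0 < ((a-2)^2-2) - a" unfolding e using h1 by linarith
  moreover have "((a-2)^2-2) - a \<le> ((a-2)*((a-2)^2-2) - (a-2)) - a*(a-3)"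
    using h2 by (simp add: power2_eq_square algebra_simps)
  ultimately show ?thesis by blast
qed

lemma gS: "e a b (2*(k+2)+p) = (a*b-2) * e a b (2*(k+1)+p) - e a b (2*k+p)"
proof -
  have ix: "2*(k+2)+p = (2*k+p)+4" "2*(k+1)+p = (2*k+p)+2" by simp_all
  show ?thesis unfolding ix by (rule e4)
qed

lemma rec_diff:
  fixes f g :: "nat \<Rightarrow> int"
  assumes "\<And>k. f (k+2) = r * f (k+1) - f k" "\<And>k. g (k+2) = r * g (k+1) - g k"
  shows "(f (k+2) - g (k+2)) = r * (f (k+1) - g (k+1)) - (f k - g k)"
  unfolding assms by (simp add: algebra_simps)

theorem lemma3p8:
  fixes a b :: int
  assumes "a \<ge> b" and "b \<ge> 1" and "b \<ge> 2 \<or> (b = 1 \<and> a \<ge> 5)"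
  shows "(\<forall>j\<ge>2. eta a b (2 * j) = real_of_int (a * b - 2) * eta a b (2 * (j - 1)) - eta a b (2 * (j - 2)))
       \<and> (\<forall>j\<ge>2. eta a b (2 * j + 1) = real_of_int (a * b - 2) * eta a b (2 * (j - 1) + 1) - eta a b (2 * (j - 2) + 1))
       \<and> eta a b 0 = real_of_int a
       \<and> eta a b 2 = real_of_int (a * (a * b - 3))
       \<and> eta a b 1 = real_of_int (a * b - 2)
       \<and> eta a b 3 = real_of_int ((a * b - 2)^2 - 2)
       \<and> (\<forall>j. real_of_int a * gamma a b j = real_of_int b * eta a b (2 * j))
       \<and> (a = 2 \<and> b = 2 \<longrightarrow> (\<forall>j. eta a b j = eta a b 0))
       \<and> (b = 1 \<and> a \<ge> 5 \<longrightarrow>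
            (\<forall>k. eta a b (2 * k + 1) < eta a b (2 * k) \<and> eta a b (2 * k) < eta a b (2 * k + 3)))
       \<and> (b \<ge> 2 \<and> (a, b) \<noteq> (2, 2) \<longrightarrow> strict_mono (eta a b))"
proof -
  have b1: "b \<ge> 1" and a1: "a \<ge> 1" using assms by auto
  note E = eta_e[OF b1]
  have e0: "e a b 0 = a" and e1: "e a b 1 = a*b - 2" and e2: "e a b 2 = a*(a*b-3)"
    and e3: "e a b 3 = (a*b-2)^2 - 2"
    by (simp_all add: e_def numeral_eq_Suc cS dS c01 algebra_simps power2_eq_square)
  have e4': "e a b 4 = (a*b-2) * e a b 2 - e a b 0" using e4[of a b 0] by (simp only: add_0)
  have n15: "(1::nat)+4 = 5" "(1::nat)+2=3" by simp_all
  have e5': "e a b 5 = (a*b-2) * e a b 3 - e a b 1" using e4[of a b 1] unfolding n15 .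
  have R1: "\<forall>j\<ge>2. eta a b (2 * j) = real_of_int (a * b - 2) * eta a b (2 * (j - 1)) - eta a b (2 * (j - 2))"
  proof (intro allI impI)
    fix j :: nat assume "j \<ge> 2"
    then obtain m where m: "j = m + 2" by (metis le_add_diff_inverse2)
    show "eta a b (2 * j) = real_of_int (a * b - 2) * eta a b (2 * (j - 1)) - eta a b (2 * (j - 2))"
    proof -
      have ix: "2*j = 2*m+4" "2*(j-1) = 2*m+2" "2*(j-2) = 2*m" using m by simp_all
      show ?thesis unfolding E ix e4 by simp
    qed
  qed
  have R2: "\<forall>j\<ge>2. eta a b (2 * j + 1) = real_of_int (a * b - 2) * eta a b (2 * (j - 1) + 1) - eta a b (2 * (j - 2) + 1)"
  proof (intro allI impI)
    fix j :: nat assume "j \<ge> 2"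
    then obtain m where m: "j = m + 2" by (metis le_add_diff_inverse2)
    show "eta a b (2 * j + 1) = real_of_int (a * b - 2) * eta a b (2 * (j - 1) + 1) - eta a b (2 * (j - 2) + 1)"
    proof -
      have ix: "2*j+1 = (2*m+1)+4" "2*(j-1)+1 = (2*m+1)+2" "2*(j-2)+1 = 2*m+1" using m by simp_all
      show ?thesis unfolding E ix e4 by simp
    qed
  qed
  have G: "\<forall>j. real_of_int a * gamma a b j = real_of_int b * eta a b (2 * j)"
  proof
    fix j
    have p: "cseq a b (2*j+1) = dseq a b (2*j+1)" "b * cseq a b (2*j) = a * dseq a b (2*j)"
      using parity[where a=a and b=b and k=j] by auto
    have "a * (b * cseq a b (2*j+1) - 2 * dseq a b (2*j)) = b * e a b (2*j)"
      unfolding e_def using p by (simp add: algebra_simps)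
    then show "real_of_int a * gamma a b j = real_of_int b * eta a b (2 * j)"
      unfolding gamma_e[OF b1 a1] E by (metis of_int_mult)
  qed
  have R0: "\<And>p k. e a b (2*(k+2)+p) = (a*b-2) * e a b (2*(k+1)+p) - e a b (2*k+p)" by (rule gS)
  have R0s: "\<And>p k. e a b (2*((k+2)+1)+p) = (a*b-2) * e a b (2*((k+1)+1)+p) - e a b (2*(k+1)+p)"
  proof -
    fix p k
    have "k+2+1 = (k+1)+(2::nat)" by simp
    then show "e a b (2*((k+2)+1)+p) = (a*b-2) * e a b (2*((k+1)+1)+p) - e a b (2*(k+1)+p)"
      by (simp only:) (rule gS)
  qed
  have C22: "a = 2 \<and> b = 2 \<longrightarrow> (\<forall>j. eta a b j = eta a b 0)"
  proof (intro impI allI)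
    fix j assume ab: "a = 2 \<and> b = 2"
    have "e a b j = 2" 
    proof (induction j rule: less_induct)
      case (less j)
      show ?case
      proof (cases "j < 4")
        case True
        then have "j = 0 \<or> j = 1 \<or> j = 2 \<or> j = 3" by auto
        then show ?thesis using ab e0 e1 e2 e3 by auto
      next
        case False
        then obtain m where m: "j = m + 4" by (metis add.commute le_add_diff_inverse not_less)
        show ?thesis unfolding m e4 using less[of "m+2"] less[of m] ab m by simp
      qed
    qed
    then show "eta a b j = eta a b 0" unfolding E using e0 ab by simp
  qed
  have C1: "b = 1 \<and> a \<ge> 5 \<longrightarrow>
            (\<forall>k. eta a b (2 * k + 1) < eta a b (2 * k) \<and> eta a b (2 * k) < eta a b (2 * k + 3))"
  proof (intro impI allI)
    fix k assume ab: "b = 1 \<and> a \<ge> 5"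
    have r: "a*b-2 \<ge> 2" using ab by simp
    have gE: "0 < (e a b (2*k+0) - e a b (2*k+1)) \<and> True"
    proof -
      have "0 < (\<lambda>k. e a b (2*k+0) - e a b (2*k+1)) k \<and> (\<lambda>k. e a b (2*k+0) - e a b (2*k+1)) k \<le> (\<lambda>k. e a b (2*k+0) - e a b (2*k+1)) (Suc k)"
      proof (rule grow[OF r])
        show "\<And>k. e a b (2*(k+2)+0) - e a b (2*(k+2)+1) = (a*b-2) * (e a b (2*(k+1)+0) - e a b (2*(k+1)+1)) - (e a b (2*k+0) - e a b (2*k+1))"
          by (rule rec_diff[where f="\<lambda>k. e a b (2*k+0)" and g="\<lambda>k. e a b (2*k+1)", OF R0 R0])
        show "0 < e a b (2*0+0) - e a b (2*0+1)" using L3[of a] ab e0 e1 by simp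
        show "e a b (2*0+0) - e a b (2*0+1) \<le> e a b (2*1+0) - e a b (2*1+1)" using L3[of a] ab e0 e1 e2 e3 by simp
      qed
      then show ?thesis by simp
    qed
    have gF: "0 < (e a b (2*(k+1)+1) - e a b (2*k+0))"
    proof -
      have "0 < (\<lambda>k. e a b (2*(k+1)+1) - e a b (2*k+0)) k \<and> (\<lambda>k. e a b (2*(k+1)+1) - e a b (2*k+0)) k \<le> (\<lambda>k. e a b (2*(k+1)+1) - e a b (2*k+0)) (Suc k)"
      proof (rule grow[OF r])
        show "\<And>k. e a b (2*((k+2)+1)+1) - e a b (2*(k+2)+0) = (a*b-2) * (e a b (2*((k+1)+1)+1) - e a b (2*(k+1)+0)) - (e a b (2*(k+1)+1) - e a b (2*k+0))"
          by (rule rec_diff[where f="\<lambda>k. e a b (2*(k+1)+1)" and g="\<lambda>k. e a b (2*k+0)", OF R0s R0])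
        show "0 < e a b (2*(0+1)+1) - e a b (2*0+0)" using L4[of a] ab e0 e3 by simp
        show "e a b (2*(0+1)+1) - e a b (2*0+0) \<le> e a b (2*(1+1)+1) - e a b (2*1+0)"
          using L4[of a] ab e0 e1 e2 e3 e5' by simp
      qed
      then show ?thesis by simp
    qed
    have ix: "2*(k+1)+1 = 2*k+3" by simp
    show "eta a b (2 * k + 1) < eta a b (2 * k) \<and> eta a b (2 * k) < eta a b (2 * k + 3)"
      using gE gF unfolding E ix by simp
  qed
  have C2: "b \<ge> 2 \<and> (a, b) \<noteq> (2, 2) \<longrightarrow> strict_mono (eta a b)"
  proof
    assume ab: "b \<ge> 2 \<and> (a, b) \<noteq> (2, 2)"
    have a3: "a \<ge> 3" using ab assms by auto
    have t2: "2*a \<le> a*b" using ab a3 by (simp add: mult_left_mono)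
    have r: "a*b-2 \<ge> 2" using t2 a3 by linarith
    have t6: "a*b \<ge> 6" using t2 a3 by linarith
    have D0: "\<And>k. 0 < e a b (2*k+1) - e a b (2*k+0)"
    proof -
      fix k
      have "0 < (\<lambda>k. e a b (2*k+1) - e a b (2*k+0)) k \<and> (\<lambda>k. e a b (2*k+1) - e a b (2*k+0)) k \<le> (\<lambda>k. e a b (2*k+1) - e a b (2*k+0)) (Suc k)"
      proof (rule grow[OF r])
        show "\<And>k. e a b (2*(k+2)+1) - e a b (2*(k+2)+0) = (a*b-2) * (e a b (2*(k+1)+1) - e a b (2*(k+1)+0)) - (e a b (2*k+1) - e a b (2*k+0))"
          by (rule rec_diff[where f="\<lambda>k. e a b (2*k+1)" and g="\<lambda>k. e a b (2*k+0)", OF R0 R0])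
        show "0 < e a b (2*0+1) - e a b (2*0+0)" using L1[of a "a*b", OF a3 t2] e0 e1 by simp
        show "e a b (2*0+1) - e a b (2*0+0) \<le> e a b (2*1+1) - e a b (2*1+0)" using L1[of a "a*b", OF a3 t2] e0 e1 e2 e3 by simp
      qed
      then show "0 < e a b (2*k+1) - e a b (2*k+0)" by simp
    qed
    have D1: "\<And>k. 0 < e a b (2*(k+1)+0) - e a b (2*k+1)"
    proof -
      fix k
      have "0 < (\<lambda>k. e a b (2*(k+1)+0) - e a b (2*k+1)) k \<and> (\<lambda>k. e a b (2*(k+1)+0) - e a b (2*k+1)) k \<le> (\<lambda>k. e a b (2*(k+1)+0) - e a b (2*k+1)) (Suc k)"
      proof (rule grow[OF r])
        show "\<And>k. e a b (2*((k+2)+1)+0) - e a b (2*(k+2)+1) = (a*b-2) * (e a b (2*((k+1)+1)+0) - e a b (2*(k+1)+1)) - (e a b (2*(k+1)+0) - e a b (2*k+1))"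
          by (rule rec_diff[where f="\<lambda>k. e a b (2*(k+1)+0)" and g="\<lambda>k. e a b (2*k+1)", OF R0s R0])
        show "0 < e a b (2*(0+1)+0) - e a b (2*0+1)" using L2[of a "a*b", OF a3 t6] e1 e2 by simp
        show "e a b (2*(0+1)+0) - e a b (2*0+1) \<le> e a b (2*(1+1)+0) - e a b (2*1+1)"
          using L2[of a "a*b", OF a3 t6] e0 e1 e2 e3 e4' by simp
      qed
      then show "0 < e a b (2*(k+1)+0) - e a b (2*k+1)" by simp
    qed
    show "strict_mono (eta a b)"
    proof (rule strict_mono_Suc_iff[THEN iffD2], intro allI)
      fix n
      show "eta a b n < eta a b (Suc n)"
      proof (cases "even n")
        case True
        then obtain k where k: "n = 2*k+0" by (metis add_0_right evenE)
        have "Suc n = 2*k+1" using k by simp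
        then show ?thesis unfolding E using D0[of k] k by simp
      next
        case False
        then obtain k where k: "n = 2*k+1" by (metis oddE)
        have "Suc n = 2*(k+1)+0" using k by simp
        then show ?thesis unfolding E using D1[of k] k by simp
      qed
    qed
  qed
  have h0: "eta a b 0 = real_of_int a" unfolding E e0 ..
  have h1: "eta a b 1 = real_of_int (a * b - 2)" unfolding E e1 ..
  have h2: "eta a b 2 = real_of_int (a * (a * b - 3))" unfolding E e2 ..
  have h3: "eta a b 3 = real_of_int ((a * b - 2)^2 - 2)" unfolding E e3 ..
  show ?thesis using R1 R2 G C22 C1 C2 h0 h1 h2 h3 by blast
qed

end
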